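(* Let $(\boldsymbol{P},\boldsymbol{\lambda})$ be a feasible train routing of a TMO instance in which every path $P_i$ has no repeated vertices. For any two distinct trains $y,z$ such that $Q_y$ and $Q_z$ share an arc, either $Q_y\subseteq Q_z$ or $Q_z\subseteq Q_y$. Moreover, if $y$ is a leader and $Q_y$ and $Q_z$ share an arc, then $Q_z\subseteq Q_y$.
   Context: An instance of TMO is $(D,\tau,d,\Delta)$ with $D=(V,A)$ a directed graph with source $s$ and sink $t$, $\tau:A\to\mathbb{Z}_{\ge0}$, $d\in\mathbb{Z}_{\ge1}$ trains and headway $\Delta\in\mathbb{Z}_{\ge1}$. A train routing $(\boldsymbol{P},\boldsymbol{\lambda})$ consists, for each train $i\in[d]$, of an $s$-$t$-path $P_i$ and an entry function $\lambda_i:P_i\to\mathbb{Z}_{\ge0}$; it is feasible if $\lambda_i(a)+\tau_a\le\lambda_i(a')$ for consecutive arcs $a,a'$ on $P_i$, and $|\lambda_i(a)-\lambda_{i'}(a)|\ge\Delta$ for $i\ne i'$ and $a\in P_i\cap P_{i'}$. For an arc $a$ let $S_a$ be the set of trains using $a$; for $x,y\in S_a$ write $x\prec_a y$ if $\lambda_x(a)<\lambda_y(a)$. For a train $x$ and arc $a\in P_x$, let $\bar S^x_a$ be the tuple, ordered by $\prec_a$, of all trains $y\in S_a$ with $\lambda_y(a)\le\lambda_x(a)$ (including $x$). Let $\ell_x$ be the last arc of $P_x$ (it enters $t$). The transition arc $a^{tr}_x$ is the last arc $a$ on $P_x$ with $\bar S^x_a\ne\bar S^x_{\ell_x}$, and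 $a^{tr}_x=\bot$ if no such arc exists. $Q_x$ is the subpath of $P_x$ from the head of $a^{tr}_x$ to $t$ (so $a^{tr}_x\notin Q_x$); if $a^{tr}_x=\bot$, $Q_x=P_x$. Paths are regarded as arc sets for $\subseteq$. A train $x$ is a leader if it is the first train (w.r.t. $\prec_{\ell_x}$) on its last arc $\ell_x$. *)

theory Defs
  imports Main
begin

(* Arcs of the directed graph D = (V, A) are pairs (tail, head). *)
type_synonym 'v arc = "'v \<times> 'v"

definition tmo_instance ::
  "'v set \<Rightarrow> 'v arc set \<Rightarrow> 'v \<Rightarrow> 'v \<Rightarrow> ('v arc \<Rightarrow> nat) \<Rightarrow> nat \<Rightarrow> nat \<Rightarrow> bool" where
  "tmo_instance V A s t \<tau> d \<Delta> \<longleftrightarrow>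
     A \<subseteq> V \<times> V \<and> s \<in> V \<and> t \<in> V \<and> s \<noteq> t \<and> d \<ge> 1 \<and> \<Delta> \<ge> 1"

definition st_path :: "'v arc set \<Rightarrow> 'v \<Rightarrow> 'v \<Rightarrow> 'v arc list \<Rightarrow> bool" where
  "st_path A s t P \<longleftrightarrow>
     P \<noteq> [] \<and> set P \<subseteq> A \<and> fst (hd P) = s \<and> snd (last P) = t \<and>
     (\<forall>j. Suc j < length P \<longrightarrow> snd (P ! j) = fst (P ! Suc j))"

definition path_vertices :: "'v arc list \<Rightarrow> 'v list" where
  "path_vertices P = map fst P @ [snd (last P)]"

definition vertex_simple :: "'v arc list \<Rightarrow> bool" where
  "vertex_simple P \<longleftrightarrow> distinct (path_vertices P)"

(* Feasible train routing: trains are 1..d, P i is the path of train i,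
   lam i a is the entry time lambda_i(a) of train i into arc a (only relevant for a on P i). *)
definition feasible_routing ::
  "'v set \<Rightarrow> 'v arc set \<Rightarrow> 'v \<Rightarrow> 'v \<Rightarrow> ('v arc \<Rightarrow> nat) \<Rightarrow> nat \<Rightarrow> nat \<Rightarrow>
   (nat \<Rightarrow> 'v arc list) \<Rightarrow> (nat \<Rightarrow> 'v arc \<Rightarrow> nat) \<Rightarrow> bool" where
  "feasible_routing V A s t \<tau> d \<Delta> P lam \<longleftrightarrow>
     (\<forall>i\<in>{1..d}. st_path A s t (P i)) \<and>
     (\<forall>i\<in>{1..d}. \<forall>j. Suc j < length (P i) \<longrightarrow>
         lam i (P i ! j) + \<tau> (P i ! j) \<le> lam i (P i ! Suc j)) \<and>
     (\<forall>i\<in>{1..d}. \<forall>i'\<in>{1..d}. \<forall>a. i \<noteq> i' \<longrightarrow> a \<in> set (P i) \<longrightarrow> a \<in> set (P i') \<longrightarrow>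
         \<bar>int (lam i a) - int (lam i' a)\<bar> \<ge> int \<Delta>)"

definition trains_on :: "nat \<Rightarrow> (nat \<Rightarrow> 'v arc list) \<Rightarrow> 'v arc \<Rightarrow> nat set" where
  "trains_on d P a = {i \<in> {1..d}. a \<in> set (P i)}"

definition Sbar :: "nat \<Rightarrow> (nat \<Rightarrow> 'v arc list) \<Rightarrow> (nat \<Rightarrow> 'v arc \<Rightarrow> nat) \<Rightarrow> nat \<Rightarrow> 'v arc \<Rightarrow> nat list" where
  "Sbar d P lam x a =
     sorted_key_list_of_set (\<lambda>y. lam y a) {y \<in> trains_on d P a. lam y a \<le> lam x a}"

definition last_arc :: "(nat \<Rightarrow> 'v arc list) \<Rightarrow> nat \<Rightarrow> 'v arc" where
  "last_arc P x = last (P x)"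

(* Position (index in P x) of the transition arc, None for bottom. *)
definition transition_idx :: "nat \<Rightarrow> (nat \<Rightarrow> 'v arc list) \<Rightarrow> (nat \<Rightarrow> 'v arc \<Rightarrow> nat) \<Rightarrow> nat \<Rightarrow> nat option" where
  "transition_idx d P lam x =
     (let J = {j. j < length (P x) \<and> Sbar d P lam x (P x ! j) \<noteq> Sbar d P lam x (last_arc P x)}
      in if J = {} then None else Some (Max J))"

definition Qpath :: "nat \<Rightarrow> (nat \<Rightarrow> 'v arc list) \<Rightarrow> (nat \<Rightarrow> 'v arc \<Rightarrow> nat) \<Rightarrow> nat \<Rightarrow> 'v arc set" where
  "Qpath d P lam x =
     (case transition_idx d P lam x of
        None \<Rightarrow> set (P x)
      | Some j \<Rightarrow> set (drop (Suc j) (P x)))"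

definition leader :: "nat \<Rightarrow> (nat \<Rightarrow> 'v arc list) \<Rightarrow> (nat \<Rightarrow> 'v arc \<Rightarrow> nat) \<Rightarrow> nat \<Rightarrow> bool" where
  "leader d P lam x \<longleftrightarrow>
     (\<forall>y\<in>trains_on d P (last_arc P x). y \<noteq> x \<longrightarrow> lam x (last_arc P x) < lam y (last_arc P x))"

end

theory Submission imports Defs begin

context linorder begin
lemma sk_set:
  assumes "inj_on f S" "A \<subseteq> S" "finite A"
  shows "set (sorted_key_list_of_set f A) = A"
proof -
  interpret folding_insort_key "(\<le>)" "(<)" S f by unfold_locales (rule assms(1))
  show ?thesis by (rule set_sorted_key_list_of_set[OF assms(2,3)])
qed

lemma sk_sorted:
  assumes "inj_on f S" "A \<subseteq> S"
  shows "sorted_wrt (<) (map f (sorted_key_list_of_set f A))"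
proof -
  interpret folding_insort_key "(\<le>)" "(<)" S f by unfold_locales (rule assms(1))
  show ?thesis by (rule strict_sorted_key_list_of_set[OF assms(2)])
qed

lemma sk_unique:
  assumes "inj_on f S" "A \<subseteq> S" "finite A" "sorted_wrt (<) (map f l)" "set l = A"
  shows "sorted_key_list_of_set f A = l"
proof -
  interpret folding_insort_key "(\<le>)" "(<)" S f by unfold_locales (rule assms(1))
  have "distinct (map f l)" using assms(4) by (simp add: strict_sorted_iff)
  then have "distinct l" by (simp add: distinct_map)
  then have "length l = card A" using assms(5) distinct_card by fastforce
  then show ?thesis using sorted_key_list_of_set_unique[OF assms(2,3)] assms by blast
qed
end

lemma strict_nth_le:
  fixes f :: "'b \<Rightarrow> nat"
  assumes "sorted_wrt (<) (map f L)" "i < length L" "j < length L"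
  shows "(f (L!i) \<le> f (L!j)) = (i \<le> j)"
proof -
  have s: "sorted_wrt (\<lambda>u v. f u < f v) L" using assms(1) by (simp add: sorted_wrt_map)
  show ?thesis
  proof (cases i j rule: linorder_cases)
    case less then show ?thesis using sorted_wrt_nth_less[OF s less assms(3)] by simp
  next
    case greater then show ?thesis using sorted_wrt_nth_less[OF s greater assms(2)] by simp
  qed simp
qed

lemma strict_two_keys:
  fixes f g :: "'b \<Rightarrow> nat"
  assumes "sorted_wrt (<) (map f L)" "sorted_wrt (<) (map g L)" "u \<in> set L" "v \<in> set L"
  shows "(f u \<le> f v) = (g u \<le> g v)"
proof -
  obtain i where i: "i < length L" "u = L!i" using assms(3) by (auto simp: in_set_conv_nth)
  obtain j where j: "j < length L" "v = L!j" using assms(4) by (auto simp: in_set_conv_nth)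
  show ?thesis using strict_nth_le[OF assms(1) i(1) j(1)] strict_nth_le[OF assms(2) i(1) j(1)] i j by simp
qed

lemma filter_sorted:
  fixes f :: "'b \<Rightarrow> nat"
  assumes "sorted_wrt (<) (map f L)"
  shows "sorted_wrt (<) (map f (filter p L))"
  using assms by (simp add: sorted_wrt_map sorted_wrt_filter)

lemma set_drop_nth: "set (drop k xs) = {xs!i | i. k \<le> i \<and> i < length xs}"
proof
  show "set (drop k xs) \<subseteq> {xs!i | i. k \<le> i \<and> i < length xs}"
  proof
    fix x assume "x \<in> set (drop k xs)"
    then obtain m where "m < length (drop k xs)" "x = drop k xs ! m" by (auto simp: in_set_conv_nth)
    then show "x \<in> {xs!i | i. k \<le> i \<and> i < length xs}"
      by (intro CollectI exI[of _ "k+m"]) auto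
  qed
next
  show "{xs!i | i. k \<le> i \<and> i < length xs} \<subseteq> set (drop k xs)"
  proof
    fix x assume "x \<in> {xs!i | i. k \<le> i \<and> i < length xs}"
    then obtain i where i: "k \<le> i" "i < length xs" "x = xs!i" by blast
    then have "x = drop k xs ! (i - k)" "i - k < length (drop k xs)" by auto
    then show "x \<in> set (drop k xs)" by (metis nth_mem)
  qed
qed

locale tmo_ctx =
  fixes V :: "'v set" and A :: "'v arc set" and s t :: 'v
    and \<tau> :: "'v arc \<Rightarrow> nat" and d \<Delta> :: nat
    and P :: "nat \<Rightarrow> 'v arc list" and lam :: "nat \<Rightarrow> 'v arc \<Rightarrow> nat"
  assumes inst: "tmo_instance V A s t \<tau> d \<Delta>"
    and feas: "feasible_routing V A s t \<tau> d \<Delta> P lam"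
    and simpl: "\<forall>i\<in>{1..d}. vertex_simple (P i)"
begin

abbreviation "Q \<equiv> Qpath d P lam"
abbreviation "Sb \<equiv> Sbar d P lam"

lemma lam_ne:
  assumes "i \<in> {1..d}" "i' \<in> {1..d}" "i \<noteq> i'" "a \<in> set (P i)" "a \<in> set (P i')"
  shows "lam i a \<noteq> lam i' a"
proof
  assume "lam i a = lam i' a"
  moreover have "\<bar>int (lam i a) - int (lam i' a)\<bar> \<ge> int \<Delta>"
    using feas assms unfolding feasible_routing_def by blast
  moreover have "\<Delta> \<ge> 1" using inst unfolding tmo_instance_def by simp
  ultimately show False by simp
qed

lemma inj_tr: "inj_on (\<lambda>w. lam w b) (trains_on d P b)"
proof (rule inj_onI)
  fix u w assume "u \<in> trains_on d P b" "w \<in> trains_on d P b" "lam u b = lam w b"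
  then show "u = w" using lam_ne[of u w b] by (auto simp: trains_on_def)
qed

lemma fin_tr: "finite (trains_on d P b)"
  by (simp add: trains_on_def)

lemma path_facts:
  assumes "x \<in> {1..d}"
  shows "P x \<noteq> []" "\<And>j. Suc j < length (P x) \<Longrightarrow> snd (P x ! j) = fst (P x ! Suc j)"
    "snd (last (P x)) = t" "distinct (map fst (P x))" "t \<notin> fst ` set (P x)"
proof -
  have sp: "st_path A s t (P x)" using feas assms unfolding feasible_routing_def by blast
  then show "P x \<noteq> []" "\<And>j. Suc j < length (P x) \<Longrightarrow> snd (P x ! j) = fst (P x ! Suc j)"
    "snd (last (P x)) = t" unfolding st_path_def by auto
  have "vertex_simple (P x)" using simpl assms by blast
  then have "distinct (map fst (P x) @ [snd (last (P x))])"
    unfolding vertex_simple_def path_vertices_def .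
  then show "distinct (map fst (P x))" "t \<notin> fst ` set (P x)"
    using \<open>snd (last (P x)) = t\<close> by auto
qed

lemma dist_arcs: "x \<in> {1..d} \<Longrightarrow> distinct (P x)"
  using path_facts(4) distinct_map by blast

lemma fst_inj:
  assumes "x \<in> {1..d}" "i < length (P x)" "j < length (P x)" "fst (P x ! i) = fst (P x ! j)"
  shows "i = j"
  using nth_eq_iff_index_eq[OF path_facts(4)[OF assms(1)], of i j] assms by simp

lemma snd_ne_t:
  assumes "x \<in> {1..d}" "Suc i < length (P x)"
  shows "snd (P x ! i) \<noteq> t"
proof
  assume "snd (P x ! i) = t"
  then have "fst (P x ! Suc i) = t" using path_facts(2)[OF assms] by simp
  moreover have "P x ! Suc i \<in> set (P x)" using assms(2) by simp
  ultimately show False using path_facts(5)[OF assms(1)] by force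
qed

lemma last_unique:
  assumes "x \<in> {1..d}" "e \<in> set (P x)" "snd e = t"
  shows "e = last (P x)"
proof -
  obtain i where i: "i < length (P x)" "e = P x ! i" using assms(2) by (auto simp: in_set_conv_nth)
  have "\<not> Suc i < length (P x)" using snd_ne_t[OF assms(1)] i assms(3) by blast
  then have "i = length (P x) - 1" using i by simp
  then show ?thesis using i last_conv_nth[OF path_facts(1)[OF assms(1)]] by simp
qed

lemma Qform:
  assumes "x \<in> {1..d}"
  shows "\<exists>k<length (P x). Q x = set (drop k (P x)) \<and>
     (\<forall>i. k \<le> i \<and> i < length (P x) \<longrightarrow> Sb x (P x ! i) = Sb x (last_arc P x))"
proof -
  define n where "n = length (P x)"
  define J where "J = {j. j < length (P x) \<and> Sb x (P x ! j) \<noteq> Sb x (last_arc P x)}"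
  have ti: "transition_idx d P lam x = (if J = {} then None else Some (Max J))"
    by (simp add: transition_idx_def J_def Let_def)
  have fJ: "finite J" unfolding J_def by simp
  have ne: "P x \<noteq> []" using path_facts(1)[OF assms] .
  then have n0: "n > 0" unfolding n_def by simp
  have la: "last_arc P x = P x ! (n - 1)" unfolding last_arc_def n_def using last_conv_nth[OF ne] .
  have nJ: "n - 1 \<notin> J" unfolding J_def using la by simp
  show ?thesis
  proof (cases "J = {}")
    case True
    then have "Q x = set (drop 0 (P x))" by (simp add: Qpath_def ti)
    moreover have "\<forall>i. 0 \<le> i \<and> i < length (P x) \<longrightarrow> Sb x (P x ! i) = Sb x (last_arc P x)"
      using True unfolding J_def by blast
    ultimately show ?thesis using n0 n_def by blast
  next
    case False
    define j where "j = Max J"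
    have jJ: "j \<in> J" using False fJ j_def by simp
    then have "j < n" unfolding J_def n_def by simp
    moreover have "j \<noteq> n - 1" using jJ nJ by auto
    ultimately have sj: "Suc j < n" by simp
    have "Q x = set (drop (Suc j) (P x))" using False by (simp add: Qpath_def ti j_def)
    moreover have "\<forall>i. Suc j \<le> i \<and> i < length (P x) \<longrightarrow> Sb x (P x ! i) = Sb x (last_arc P x)"
    proof (intro allI impI)
      fix i assume i: "Suc j \<le> i \<and> i < length (P x)"
      have "i \<notin> J" using Max_ge[OF fJ] i j_def by fastforce
      then show "Sb x (P x ! i) = Sb x (last_arc P x)" using i unfolding J_def by blast
    qed
    ultimately show ?thesis using sj n_def by blast
  qed
qed

lemma Qmin:
  assumes "x \<in> {1..d}" "\<forall>i. m \<le> i \<and> i < length (P x) \<longrightarrow> Sb x (P x ! i) = Sb x (last_arc P x)"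
  shows "set (drop m (P x)) \<subseteq> Q x"
proof -
  define J where "J = {j. j < length (P x) \<and> Sb x (P x ! j) \<noteq> Sb x (last_arc P x)}"
  have ti: "transition_idx d P lam x = (if J = {} then None else Some (Max J))"
    by (simp add: transition_idx_def J_def Let_def)
  have fJ: "finite J" unfolding J_def by simp
  show ?thesis
  proof (cases "J = {}")
    case True
    then show ?thesis by (simp add: Qpath_def ti set_drop_subset)
  next
    case False
    define j where "j = Max J"
    have jJ: "j \<in> J" using False fJ j_def by simp
    then have "\<not> m \<le> j" using assms(2) unfolding J_def by blast
    then have "set (drop m (P x)) \<subseteq> set (drop (Suc j) (P x))"
      by (intro set_drop_subset_set_drop) simp
    then show ?thesis using False by (simp add: Qpath_def ti j_def)
  qed
qed

lemma Q_elem: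
  assumes "x \<in> {1..d}" "b \<in> Q x"
  shows "b \<in> set (P x)" "Sb x b = Sb x (last_arc P x)"
proof -
  obtain k where k: "k < length (P x)" "Q x = set (drop k (P x))"
     "\<forall>i. k \<le> i \<and> i < length (P x) \<longrightarrow> Sb x (P x ! i) = Sb x (last_arc P x)"
    using Qform[OF assms(1)] by blast
  obtain i where i: "k \<le> i" "i < length (P x)" "b = P x ! i"
    using assms(2) unfolding k(2) set_drop_nth by blast
  show "b \<in> set (P x)" using i by simp
  show "Sb x b = Sb x (last_arc P x)" using i k(3) by blast
qed

lemma last_in_Q:
  assumes "x \<in> {1..d}" shows "last_arc P x \<in> Q x"
proof -
  obtain k where k: "k < length (P x)" "Q x = set (drop k (P x))"
    using Qform[OF assms(1)] by blast
  have "last_arc P x = P x ! (length (P x) - 1)"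
    unfolding last_arc_def using last_conv_nth[OF path_facts(1)[OF assms]] .
  moreover have "k \<le> length (P x) - 1" "length (P x) - 1 < length (P x)" using k(1) by auto
  ultimately show ?thesis unfolding k(2) set_drop_nth by blast
qed

lemma Q_idx:
  assumes "x \<in> {1..d}" "i < length (P x)" "P x ! i \<in> Q x" "Suc i < length (P x)"
  shows "P x ! Suc i \<in> Q x"
proof -
  obtain k where k: "k < length (P x)" "Q x = set (drop k (P x))"
    using Qform[OF assms(1)] by blast
  obtain i' where i': "k \<le> i'" "i' < length (P x)" "P x ! i = P x ! i'"
    using assms(3) unfolding k(2) set_drop_nth by blast
  have "i = i'" using nth_eq_iff_index_eq[OF dist_arcs[OF assms(1)] assms(2) i'(2)] i'(3) by simp
  then have "k \<le> Suc i" using i'(1) by simp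
  then show ?thesis using assms(4) unfolding k(2) set_drop_nth by blast
qed


lemma Sbar_transfer:
  assumes eq: "Sb y b = Sb y c" and zb: "z \<in> trains_on d P b" and le: "lam z b \<le> lam y b"
  shows "z \<in> trains_on d P c \<and> lam z c \<le> lam y c \<and> Sb z b = Sb z c"
proof -
  define Sy where "Sy e = {w \<in> trains_on d P e. lam w e \<le> lam y e}" for e
  define L where "L = Sb y b"
  have sub: "Sy e \<subseteq> trains_on d P e" for e unfolding Sy_def by blast
  have fin: "finite (Sy e)" for e using finite_subset[OF sub fin_tr] .
  have Lb: "L = sorted_key_list_of_set (\<lambda>w. lam w b) (Sy b)" by (simp add: L_def Sbar_def Sy_def)
  have Lc: "L = sorted_key_list_of_set (\<lambda>w. lam w c) (Sy c)" using eq by (simp add: L_def Sbar_def Sy_def)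
  have setb: "set L = Sy b" unfolding Lb by (rule sk_set[OF inj_tr sub fin])
  have setc: "set L = Sy c" unfolding Lc by (rule sk_set[OF inj_tr sub fin])
  have sb: "sorted_wrt (<) (map (\<lambda>w. lam w b) L)" unfolding Lb by (rule sk_sorted[OF inj_tr sub])
  have sc: "sorted_wrt (<) (map (\<lambda>w. lam w c) L)" unfolding Lc by (rule sk_sorted[OF inj_tr sub])
  have zL: "z \<in> set L" using setb zb le by (simp add: Sy_def)
  then have "z \<in> Sy c" using setc by simp
  then have zc: "z \<in> trains_on d P c" "lam z c \<le> lam y c" unfolding Sy_def by simp_all
  define X where "X = {w \<in> set L. lam w b \<le> lam z b}"
  have Xb: "{w \<in> trains_on d P b. lam w b \<le> lam z b} = X"
  proof -
    have "{w \<in> trains_on d P b. lam w b \<le> lam z b} = {w \<in> Sy b. lam w b \<le> lam z b}"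
      using le unfolding Sy_def by auto
    then show ?thesis unfolding X_def setb .
  qed
  have X2: "{w \<in> set L. lam w c \<le> lam z c} = X"
    unfolding X_def using strict_two_keys[OF sb sc _ zL] by blast
  have Xc: "{w \<in> trains_on d P c. lam w c \<le> lam z c} = X"
  proof -
    have "{w \<in> trains_on d P c. lam w c \<le> lam z c} = {w \<in> Sy c. lam w c \<le> lam z c}"
      using zc(2) unfolding Sy_def by auto
    then show ?thesis unfolding X2[symmetric] setc .
  qed
  have XL: "set (filter (\<lambda>w. w \<in> X) L) = X" by (auto simp: X_def)
  have Xsb: "X \<subseteq> trains_on d P b" using Xb by blast
  have Xsc: "X \<subseteq> trains_on d P c" using Xc by blast
  have finX: "finite X" using finite_subset[OF Xsb fin_tr] .
  have "Sb z b = filter (\<lambda>w. w \<in> X) L"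
    unfolding Sbar_def Xb by (rule sk_unique[OF inj_tr Xsb finX filter_sorted[OF sb] XL])
  moreover have "Sb z c = filter (\<lambda>w. w \<in> X) L"
    unfolding Sbar_def Xc by (rule sk_unique[OF inj_tr Xsc finX filter_sorted[OF sc] XL])
  ultimately show ?thesis using zc by simp
qed

lemma core:
  assumes y: "y \<in> {1..d}" and z: "z \<in> {1..d}" and ay: "a \<in> Q y" and az: "a \<in> Q z"
    and lt: "lam z a < lam y a"
  shows "Q y \<subseteq> Q z \<and> z \<in> trains_on d P (last_arc P y) \<and>
         lam z (last_arc P y) \<le> lam y (last_arc P y)"
proof -
  define l where "l = last_arc P y"
  have za: "z \<in> trains_on d P a" using Q_elem(1)[OF z az] z by (simp add: trains_on_def)
  have zl: "z \<in> trains_on d P l" "lam z l \<le> lam y l"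
    using Sbar_transfer[OF Q_elem(2)[OF y ay] za] lt unfolding l_def by auto
  have allb: "z \<in> trains_on d P b \<and> lam z b \<le> lam y b \<and> Sb z b = Sb z l" if b: "b \<in> Q y" for b
    using Sbar_transfer[OF Q_elem(2)[OF y b, symmetric, folded l_def] zl] by auto
  have "l \<in> set (P z)" using zl(1) by (simp add: trains_on_def)
  moreover have "snd l = t" using path_facts(3)[OF y] by (simp add: l_def last_arc_def)
  ultimately have ll: "l = last_arc P z" using last_unique[OF z] by (simp add: last_arc_def)
  have "b \<in> Q z" if b: "b \<in> Q y" for b
  proof -
    have "b \<in> set (P z)" using allb[OF b] by (simp add: trains_on_def)
    then obtain k where k: "k < length (P z)" "b = P z ! k" by (auto simp: in_set_conv_nth)
    have suf: "k \<le> i \<Longrightarrow> i < length (P z) \<Longrightarrow> P z ! i \<in> Q y" for i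
    proof (induction i)
      case 0 then show ?case using k b by simp
    next
      case (Suc i)
      show ?case
      proof (cases "k = Suc i")
        case True then show ?thesis using k b by simp
      next
        case False
        then have e: "P z ! i \<in> Q y" using Suc by simp
        have "P z ! i \<in> set (P y)" using Q_elem(1)[OF y e] .
        then obtain p where p: "p < length (P y)" "P z ! i = P y ! p" by (auto simp: in_set_conv_nth)
        have ne: "snd (P z ! i) \<noteq> t" using snd_ne_t[OF z Suc.prems(2)] .
        have sp: "Suc p < length (P y)"
        proof (rule ccontr)
          assume "\<not> Suc p < length (P y)"
          then have "p = length (P y) - 1" using p by simp
          then have "P y ! p = last (P y)" using last_conv_nth[OF path_facts(1)[OF y]] by simp
          then show False using ne p path_facts(3)[OF y] by simp
        qed
        have nq: "P y ! Suc p \<in> Q y" using Q_idx[OF y p(1) _ sp] e p by simp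
        have "P y ! Suc p \<in> set (P z)" using allb[OF nq] by (simp add: trains_on_def)
        then obtain q where q: "q < length (P z)" "P y ! Suc p = P z ! q" by (auto simp: in_set_conv_nth)
        have "fst (P z ! q) = fst (P z ! Suc i)"
          using q(2) path_facts(2)[OF y sp] path_facts(2)[OF z Suc.prems(2)] p(2) by simp
        then have "q = Suc i" using fst_inj[OF z q(1) Suc.prems(2)] by simp
        then show ?thesis using nq q by simp
      qed
    qed
    have "set (drop k (P z)) \<subseteq> Q z"
    proof (rule Qmin[OF z], intro allI impI)
      fix i assume "k \<le> i \<and> i < length (P z)"
      then show "Sb z (P z ! i) = Sb z (last_arc P z)" using allb suf ll by blast
    qed
    moreover have "b \<in> set (drop k (P z))" unfolding set_drop_nth using k by blast
    ultimately show ?thesis by blast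
  qed
  then show ?thesis using zl l_def by blast
qed

end

theorem mainTheorem4:
  fixes V :: "'v set" and A :: "'v arc set" and s t :: 'v
    and \<tau> :: "'v arc \<Rightarrow> nat" and d \<Delta> :: nat
    and P :: "nat \<Rightarrow> 'v arc list" and lam :: "nat \<Rightarrow> 'v arc \<Rightarrow> nat"
    and y z :: nat
  assumes "tmo_instance V A s t \<tau> d \<Delta>"
    and "feasible_routing V A s t \<tau> d \<Delta> P lam"
    and "\<forall>i\<in>{1..d}. vertex_simple (P i)"
    and "y \<in> {1..d}" and "z \<in> {1..d}" and "y \<noteq> z"
    and "Qpath d P lam y \<inter> Qpath d P lam z \<noteq> {}"
  shows "(Qpath d P lam y \<subseteq> Qpath d P lam z \<or> Qpath d P lam z \<subseteq> Qpath d P lam y)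
         \<and> (leader d P lam y \<longrightarrow> Qpath d P lam z \<subseteq> Qpath d P lam y)"
proof -
  interpret tmo_ctx V A s t \<tau> d \<Delta> P lam
    using assms(1-3) by unfold_locales
  obtain a where ay: "a \<in> Q y" and az: "a \<in> Q z" using assms(7) by blast
  have "lam y a \<noteq> lam z a"
    using lam_ne[OF assms(4,5,6) Q_elem(1)[OF assms(4) ay] Q_elem(1)[OF assms(5) az]] .
  then show ?thesis
  proof (cases "lam z a < lam y a")
    case True
    have c: "Q y \<subseteq> Q z" "z \<in> trains_on d P (last_arc P y)"
      "lam z (last_arc P y) \<le> lam y (last_arc P y)"
      using core[OF assms(4,5) ay az True] by auto
    have "\<not> leader d P lam y" using c(2,3) assms(6) unfolding leader_def by force
    then show ?thesis using c(1) by blast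
  next
    case False
    then have "lam y a < lam z a" using \<open>lam y a \<noteq> lam z a\<close> by simp
    then have "Q z \<subseteq> Q y" using core[OF assms(5,4) az ay] by auto
    then show ?thesis by blast
  qed
qed

end
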